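(* Let $S$ be a Hausdorff countably compact topological semigroup which is algebraically a primitive inverse semigroup. Then the inversion $x\mapsto x^{-1}$ on $S$ is continuous if and only if every maximal subgroup of $S$ (with the subspace topology) is a topological group.
   Context: A topological semigroup is a Hausdorff space with jointly continuous associative operation. A semigroup is inverse if every $x$ has a unique $y=x^{-1}$ with $xyx=x$, $yxy=y$; it is primitive inverse if it is non-trivial, inverse, has a zero and all non-zero idempotents are minimal among non-zero idempotents in the natural order. A maximal subgroup is a maximal subgroup of $S$ containing a given idempotent. *)

theory Defs
  imports "HOL-Analysis.Analysis"
begin

text \<open>A topological semigroup: a (Hausdorff) space with a jointly continuous
associative operation. The carrier is the whole type; Hausdorffness is
imposed via the class t2_space in the statement.\<close>
definition topological_semigroup :: "('a::topological_space \<Rightarrow> 'a \<Rightarrow> 'a) \<Rightarrow> bool" where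
  "topological_semigroup m \<longleftrightarrow>
     (\<forall>x y z. m (m x y) z = m x (m y z)) \<and>
     continuous_on UNIV (\<lambda>p. m (fst p) (snd p))"

definition inverse_semigroup :: "('a \<Rightarrow> 'a \<Rightarrow> 'a) \<Rightarrow> bool" where
  "inverse_semigroup m \<longleftrightarrow>
     (\<forall>x y z. m (m x y) z = m x (m y z)) \<and>
     (\<forall>x. \<exists>!y. m (m x y) x = x \<and> m (m y x) y = y)"

definition sg_inv :: "('a \<Rightarrow> 'a \<Rightarrow> 'a) \<Rightarrow> 'a \<Rightarrow> 'a" where
  "sg_inv m x = (THE y. m (m x y) x = x \<and> m (m y x) y = y)"

definition is_zero :: "('a \<Rightarrow> 'a \<Rightarrow> 'a) \<Rightarrow> 'a \<Rightarrow> bool" where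
  "is_zero m z \<longleftrightarrow> (\<forall>x. m z x = z \<and> m x z = z)"

definition idempotent :: "('a \<Rightarrow> 'a \<Rightarrow> 'a) \<Rightarrow> 'a \<Rightarrow> bool" where
  "idempotent m e \<longleftrightarrow> m e e = e"

definition idem_le :: "('a \<Rightarrow> 'a \<Rightarrow> 'a) \<Rightarrow> 'a \<Rightarrow> 'a \<Rightarrow> bool" where
  "idem_le m e f \<longleftrightarrow> e = m e f \<and> e = m f e"

definition primitive_inverse_semigroup :: "('a \<Rightarrow> 'a \<Rightarrow> 'a) \<Rightarrow> bool" where
  "primitive_inverse_semigroup m \<longleftrightarrow>
     inverse_semigroup m \<and>
     (\<exists>z. is_zero m z \<and> (\<exists>x. x \<noteq> z) \<and>
        (\<forall>e f. idempotent m e \<and> idempotent m f \<and> e \<noteq> z \<and> f \<noteq> z \<and> idem_le m e f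
               \<longrightarrow> e = f))"

definition subgroup_at :: "('a \<Rightarrow> 'a \<Rightarrow> 'a) \<Rightarrow> 'a set \<Rightarrow> 'a \<Rightarrow> bool" where
  "subgroup_at m G e \<longleftrightarrow>
     e \<in> G \<and> (\<forall>x\<in>G. \<forall>y\<in>G. m x y \<in> G) \<and>
     (\<forall>x\<in>G. m e x = x \<and> m x e = x) \<and>
     (\<forall>x\<in>G. \<exists>y\<in>G. m x y = e \<and> m y x = e)"

definition is_subgroup :: "('a \<Rightarrow> 'a \<Rightarrow> 'a) \<Rightarrow> 'a set \<Rightarrow> bool" where
  "is_subgroup m G \<longleftrightarrow> (\<exists>e. subgroup_at m G e)"

definition maximal_subgroup :: "('a \<Rightarrow> 'a \<Rightarrow> 'a) \<Rightarrow> 'a set \<Rightarrow> bool" where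
  "maximal_subgroup m G \<longleftrightarrow>
     is_subgroup m G \<and> (\<forall>G'. is_subgroup m G' \<and> G \<subseteq> G' \<longrightarrow> G' = G)"

definition topological_subgroup :: "('a::topological_space \<Rightarrow> 'a \<Rightarrow> 'a) \<Rightarrow> 'a set \<Rightarrow> bool" where
  "topological_subgroup m G \<longleftrightarrow>
     (\<exists>e. subgroup_at m G e \<and>
        continuous_on (G \<times> G) (\<lambda>p. m (fst p) (snd p)) \<and>
        continuous_on G (\<lambda>x. THE y. y \<in> G \<and> m x y = e \<and> m y x = e))"

end

theory Submission
  imports Defs
begin


locale isg =
  fixes m :: "'a \<Rightarrow> 'a \<Rightarrow> 'a"
  assumes isg: "inverse_semigroup m"
begin

abbreviation i where "i \<equiv> sg_inv m"

lemma assoc[simp]: "m (m x y) w = m x (m y w)"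
  using isg unfolding inverse_semigroup_def by blast

lemma ex1: "\<exists>!y. m (m x y) x = x \<and> m (m y x) y = y"
  using isg unfolding inverse_semigroup_def by blast

lemma inv12: "m (m x (i x)) x = x \<and> m (m (i x) x) (i x) = i x"
  unfolding sg_inv_def by (rule theI'[OF ex1])

lemma inv1[simp]: "m x (m (i x) x) = x" using inv12 by simp
lemma inv2[simp]: "m (i x) (m x (i x)) = i x" using inv12 by simp

lemma inv1'[simp]: "m x (m (i x) (m x y)) = m x y" by (metis assoc inv1)
lemma inv2'[simp]: "m (i x) (m x (m (i x) y)) = m (i x) y" by (metis assoc inv2)

lemma inv_uniq: "m x (m y x) = x \<Longrightarrow> m y (m x y) = y \<Longrightarrow> i x = y"
  unfolding sg_inv_def by (rule the1_equality[OF ex1]) simp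

lemma ii[simp]: "i (i x) = x"
  by (rule inv_uniq) simp_all

lemma idem_inv: "m e e = e \<Longrightarrow> i e = e"
  by (rule inv_uniq) simp_all

lemma idem_prod:
  assumes e: "m e e = e" and f: "m f f = f"
  shows "m (m e f) (m e f) = m e f"
proof -
  define x where "x = i (m e f)"
  have a: "m (m e f) (m x (m e f)) = m e f" unfolding x_def using inv1 by simp
  have b: "m x (m (m e f) x) = x" unfolding x_def using inv2 by (metis assoc)
  have "i (m e f) = m f (m x e)"
  proof (rule inv_uniq)
    have "m (m e f) (m (m f (m x e)) (m e f)) = m e (m (m f f) (m x (m (m e e) f)))" by simp
    also have "\<dots> = m (m e f) (m x (m e f))" using e f by simp
    finally show "m (m e f) (m (m f (m x e)) (m e f)) = m e f" using a by simp
    have "m (m f (m x e)) (m (m e f) (m f (m x e))) = m f (m x (m (m e e) (m (m f f) (m x e))))" by simp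
    also have "\<dots> = m f (m (m x (m (m e f) x)) e)" using e f by simp
    also have "\<dots> = m f (m x e)" using b by simp
    finally show "m (m f (m x e)) (m (m e f) (m f (m x e))) = m f (m x e)" .
  qed
  hence xe: "x = m f (m x e)" unfolding x_def .
  have "m x x = m f (m (m x (m (m e f) x)) e)" by (subst xe, subst (2) xe) simp
  also have "\<dots> = x" using b xe by simp
  finally have xx: "m x x = x" .
  have "m e f = i x" unfolding x_def by simp
  also have "\<dots> = x" using idem_inv[OF xx] .
  finally show ?thesis using xx by simp
qed

lemma idem_comm:
  assumes e: "m e e = e" and f: "m f f = f"
  shows "m e f = m f e"
proof -
  have "i (m e f) = m f e"
  proof (rule inv_uniq)
    have "m (m e f) (m (m f e) (m e f)) = m e (m (m f f) (m (m e e) f))" by simp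
    also have "\<dots> = m (m e f) (m e f)" using e f by simp
    also have "\<dots> = m e f" using idem_prod[OF e f] .
    finally show "m (m e f) (m (m f e) (m e f)) = m e f" .
    have "m (m f e) (m (m e f) (m f e)) = m f (m (m e e) (m (m f f) e))" by simp
    also have "\<dots> = m (m f e) (m f e)" using e f by simp
    also have "\<dots> = m f e" using idem_prod[OF f e] .
    finally show "m (m f e) (m (m e f) (m f e)) = m f e" .
  qed
  moreover have "i (m e f) = m e f" using idem_inv[OF idem_prod[OF e f]] .
  ultimately show ?thesis by simp
qed

definition r where "r x = m x (i x)"
definition d where "d x = m (i x) x"

lemma r_idem: "m (r x) (r x) = r x" unfolding r_def by (metis assoc inv1)
lemma d_idem: "m (d x) (d x) = d x" unfolding d_def by (metis assoc inv2)
lemma r_left[simp]: "m (r x) x = x" unfolding r_def by simp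
lemma d_right[simp]: "m x (d x) = x" unfolding d_def by simp

lemma inv_prod: "i (m x y) = m (i y) (i x)"
proof (rule inv_uniq)
  have c: "m (m y (i y)) (m (i x) x) = m (m (i x) x) (m y (i y))"
    using idem_comm[OF r_idem d_idem] unfolding r_def d_def .
  have "m (m x y) (m (m (i y) (i x)) (m x y)) = m x (m (m (m y (i y)) (m (i x) x)) y)" by simp
  also have "\<dots> = m x (m (m (m (i x) x) (m y (i y))) y)" using c by simp
  also have "\<dots> = m x y" by simp
  finally show "m (m x y) (m (m (i y) (i x)) (m x y)) = m x y" .
  have "m (m (i y) (i x)) (m (m x y) (m (i y) (i x))) = m (i y) (m (m (m (i x) x) (m y (i y))) (i x))" by simp
  also have "\<dots> = m (i y) (m (m (m y (i y)) (m (i x) x)) (i x))" using c by simp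
  also have "\<dots> = m (i y) (i x)" by simp
  finally show "m (m (i y) (i x)) (m (m x y) (m (i y) (i x))) = m (i y) (i x)" .
qed

lemma r_inv: "r (i x) = d x" unfolding r_def d_def by simp
lemma d_inv: "d (i x) = r x" unfolding r_def d_def by simp
lemma idem_r: "m e e = e \<Longrightarrow> r e = e" unfolding r_def using idem_inv by simp
lemma idem_d: "m e e = e \<Longrightarrow> d e = e" unfolding d_def using idem_inv by simp


lemma group_inv:
  assumes G: "subgroup_at m G e" and x: "x \<in> G"
  shows "(THE y. y \<in> G \<and> m x y = e \<and> m y x = e) = i x"
proof -
  have P: "i x = y" if "y \<in> G" "m x y = e" "m y x = e" for y
  proof (rule inv_uniq)
    show "m x (m y x) = x" using that G x unfolding subgroup_at_def by simp
    have "m y (m x y) = m (m y x) y" by simp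
    also have "\<dots> = y" using that G unfolding subgroup_at_def by simp
    finally show "m y (m x y) = y" .
  qed
  obtain y where y: "y \<in> G" "m x y = e" "m y x = e" using G x unfolding subgroup_at_def by blast
  show ?thesis
  proof (rule the_equality)
    show "i x \<in> G \<and> m x (i x) = e \<and> m (i x) x = e" using P[OF y] y by simp
  qed (use P in auto)
qed

lemma subgroup_rd:
  assumes G: "subgroup_at m G e" and x: "x \<in> G"
  shows "r x = e \<and> d x = e"
proof -
  obtain y where y: "y \<in> G" "m x y = e" "m y x = e" using G x unfolding subgroup_at_def by blast
  have "i x = y"
  proof (rule inv_uniq)
    show "m x (m y x) = x" using y G x unfolding subgroup_at_def by simp
    show "m y (m x y) = y" using y G unfolding subgroup_at_def by simp
  qed
  thus ?thesis using y unfolding r_def d_def by simp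
qed

end

locale pisg = isg +
  fixes z
  assumes zero: "is_zero m z"
    and prim: "\<And>e f. idempotent m e \<Longrightarrow> idempotent m f \<Longrightarrow> e \<noteq> z \<Longrightarrow> f \<noteq> z \<Longrightarrow> idem_le m e f \<Longrightarrow> e = f"
begin

lemma zl[simp]: "m z x = z" and zr[simp]: "m x z = z" using zero unfolding is_zero_def by auto
lemma zl'[simp]: "m z (m x y) = z" by (metis assoc zl)

lemma inv_z[simp]: "i z = z" by (rule inv_uniq) simp_all

lemma orth:
  assumes e: "m e e = e" and f: "m f f = f" and ez: "e \<noteq> z" and fz: "f \<noteq> z" and ne: "e \<noteq> f"
  shows "m e f = z"
proof (rule ccontr)
  assume nz: "m e f \<noteq> z"
  have c: "m e f = m f e" using idem_comm[OF e f] .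
  have I: "idempotent m (m e f)" using idem_prod[OF e f] unfolding idempotent_def .
  have "idem_le m (m e f) e" unfolding idem_le_def using c e by (metis assoc)
  hence 1: "m e f = e" using prim[OF I _ nz ez] e unfolding idempotent_def by blast
  have "idem_le m (m e f) f" unfolding idem_le_def using c f by (metis assoc)
  hence 2: "m e f = f" using prim[OF I _ nz fz] f unfolding idempotent_def by blast
  show False using 1 2 ne by simp
qed

lemma r_nz: "x \<noteq> z \<Longrightarrow> r x \<noteq> z" using r_left[of x] by (metis zl)
lemma d_nz: "x \<noteq> z \<Longrightarrow> d x \<noteq> z" using d_right[of x] by (metis zr)

lemma key_r:
  assumes "m (r a) y \<noteq> z" shows "r y = r a"
proof (rule ccontr)
  assume ne: "r y \<noteq> r a"
  have yz: "y \<noteq> z" using assms by (metis zr)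
  have az: "r a \<noteq> z" using assms by (metis zl)
  have "m (r a) (r y) = z" using orth[OF r_idem r_idem az r_nz[OF yz]] ne by simp
  hence "m (r a) y = z" by (metis assoc r_left zl)
  thus False using assms by simp
qed

lemma key_d:
  assumes "m y (d a) \<noteq> z" shows "d y = d a"
proof (rule ccontr)
  assume ne: "d y \<noteq> d a"
  have yz: "y \<noteq> z" using assms by (metis zl)
  have az: "d a \<noteq> z" using assms by (metis zr)
  have "m (d y) (d a) = z" using orth[OF d_idem d_idem d_nz[OF yz] az] ne by simp
  hence "m y (d a) = z" by (metis assoc d_right zr)
  thus False using assms by simp
qed

definition H where "H e = {x. r x = e \<and> d x = e}"

lemma H_sub:
  assumes e: "m e e = e"
  shows "subgroup_at m (H e) e"
  unfolding subgroup_at_def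
proof (intro conjI ballI)
  show "e \<in> H e" using idem_r[OF e] idem_d[OF e] unfolding H_def by simp
next
  fix x y assume x: "x \<in> H e" and y: "y \<in> H e"
  have "r (m x y) = m x (m (r y) (i x))" unfolding r_def by (simp add: inv_prod)
  also have "\<dots> = m x (m (d x) (i x))" using x y unfolding H_def by (metis (mono_tags) mem_Collect_eq)
  also have "\<dots> = m (m x (d x)) (i x)" by (rule assoc[symmetric])
  also have "\<dots> = r x" by (simp only: d_right r_def)
  finally have 1: "r (m x y) = e" using x unfolding H_def by simp
  have "d (m x y) = m (i y) (m (d x) y)" unfolding d_def by (simp add: inv_prod)
  also have "\<dots> = m (i y) (m (r y) y)" using x y unfolding H_def by (metis (mono_tags) mem_Collect_eq)
  also have "\<dots> = d y" by (simp only: r_left d_def)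
  finally have 2: "d (m x y) = e" using y unfolding H_def by simp
  show "m x y \<in> H e" using 1 2 unfolding H_def by simp
next
  fix x assume x: "x \<in> H e"
  show "m e x = x" using x r_left[of x] unfolding H_def by simp
  show "m x e = x" using x d_right[of x] unfolding H_def by simp
  show "\<exists>y\<in>H e. m x y = e \<and> m y x = e"
  proof (intro bexI[of _ "i x"] conjI)
    show "i x \<in> H e" using x unfolding H_def by (simp add: r_inv d_inv)
    show "m x (i x) = e" using x unfolding H_def r_def by simp
    show "m (i x) x = e" using x unfolding H_def d_def by simp
  qed
qed

lemma H_max:
  assumes e: "m e e = e"
  shows "maximal_subgroup m (H e)"
  unfolding maximal_subgroup_def
proof (intro conjI allI impI)
  show "is_subgroup m (H e)" using H_sub[OF e] unfolding is_subgroup_def by blast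
  fix G' assume A: "is_subgroup m G' \<and> H e \<subseteq> G'"
  then obtain e' where G': "subgroup_at m G' e'" unfolding is_subgroup_def by blast
  have "e \<in> G'" using A H_sub[OF e] unfolding subgroup_at_def by blast
  hence "e' = e" using subgroup_rd[OF G'] idem_r[OF e] by metis
  hence "G' \<subseteq> H e" using subgroup_rd[OF G'] unfolding H_def by blast
  thus "G' = H e" using A by blast
qed

end


lemma acc_in_closed:
  fixes T C :: "'a::topological_space set"
  assumes cc: "countably_compact (UNIV::'a set)" and C: "closed C" and T: "T \<subseteq> C"
    and "countable T" "infinite T"
  obtains p where "p \<in> C" "\<And>U. p \<in> U \<Longrightarrow> open U \<Longrightarrow> infinite (U \<inter> T)"
proof -
  obtain p where p: "\<And>U. p \<in> U \<and> open U \<longrightarrow> infinite (U \<inter> T)"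
    using countably_compact_imp_acc_point[OF cc \<open>countable T\<close> \<open>infinite T\<close>] by blast
  have "p \<in> C"
  proof (rule ccontr)
    assume "p \<notin> C"
    hence "infinite ((- C) \<inter> T)" using p[of "- C"] C by (simp add: open_Compl)
    moreover have "(- C) \<inter> T = {}" using T by blast
    ultimately show False by simp
  qed
  thus ?thesis using that p by blast
qed

lemma two_in_infinite:
  assumes "infinite S" obtains a b where "a \<in> S" "b \<in> S" "a \<noteq> b"
proof -
  obtain a where a: "a \<in> S" using assms by (metis finite.emptyI ex_in_conv)
  have "infinite (S - {a})" using assms by simp
  then obtain b where "b \<in> S - {a}" by (metis finite.emptyI ex_in_conv)
  thus ?thesis using a that by blast
qed

lemma finite_image_cc:
  fixes C :: "'a::topological_space set"
  assumes cc: "countably_compact (UNIV::'a set)" and C: "closed C"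
    and loc: "\<And>p. p \<in> C \<Longrightarrow> \<exists>W. open W \<and> p \<in> W \<and> (\<forall>x\<in>W \<inter> C. g x = g p)"
  shows "finite (g ` C)"
proof (rule ccontr)
  assume "infinite (g ` C)"
  then obtain f :: "nat \<Rightarrow> _" where f: "inj f" "range f \<subseteq> g ` C"
    using infinite_countable_subset by blast
  define c where "c n = (SOME x. x \<in> C \<and> g x = f n)" for n
  have c: "c n \<in> C \<and> g (c n) = f n" for n
  proof -
    have "f n \<in> g ` C" using f(2) by blast
    then obtain x where "x \<in> C" "f n = g x" by (rule imageE)
    hence "\<exists>x. x \<in> C \<and> g x = f n" by metis
    thus ?thesis unfolding c_def by (rule someI_ex)
  qed
  have cg: "g (c n) = f n" for n using c by blast
  have injc: "inj c"
  proof (rule injI)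
    fix j k assume "c j = c k"
    hence "f j = f k" using cg by metis
    thus "j = k" using f(1) by (simp add: inj_eq)
  qed
  have inf: "infinite (range c)" using injc by (simp add: finite_image_iff)
  have rc: "range c \<subseteq> C" using c by blast
  have cnt: "countable (range c)" by simp
  obtain p where p: "p \<in> C" "\<And>U. p \<in> U \<Longrightarrow> open U \<Longrightarrow> infinite (U \<inter> range c)"
    by (rule acc_in_closed[OF cc C rc cnt inf]) blast
  obtain W where W: "open W" "p \<in> W" "\<forall>x\<in>W \<inter> C. g x = g p" using loc[OF p(1)] by blast
  obtain a b where ab: "a \<in> W \<inter> range c" "b \<in> W \<inter> range c" "a \<noteq> b"
    by (rule two_in_infinite[OF p(2)[OF W(2,1)]])
  obtain j where aj: "a = c j" using ab(1) by blast
  obtain k where bk: "b = c k" using ab(2) by blast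
  have "a \<in> W \<inter> C" "b \<in> W \<inter> C" using ab rc by blast+
  hence "g a = g p" "g b = g p" using W(3) by blast+
  hence "f j = f k" using cg aj bk by metis
  hence "j = k" using f(1) by (simp add: inj_eq)
  thus False using ab aj bk by simp
qed

lemma cover_lemma:
  fixes C :: "'a::topological_space set"
  assumes cc: "countably_compact (UNIV::'a set)" and C: "closed C"
    and refl: "\<And>k. k \<in> C \<Longrightarrow> R k k"
    and loc: "\<And>p. p \<in> C \<Longrightarrow> \<exists>W. open W \<and> p \<in> W \<and> (\<forall>x\<in>W \<inter> C. \<forall>y\<in>W \<inter> C. R x y)"
  shows "\<exists>F. finite F \<and> F \<subseteq> C \<and> (\<forall>k\<in>C. \<exists>t\<in>F. R k t)"
proof (rule ccontr)
  assume neg: "\<not> ?thesis"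
  have Hy: "\<exists>k\<in>C. \<forall>t\<in>F. \<not> R k t" if "finite F" "F \<subseteq> C" for F
  proof (rule ccontr)
    assume "\<not> (\<exists>k\<in>C. \<forall>t\<in>F. \<not> R k t)"
    hence "\<forall>k\<in>C. \<exists>t\<in>F. R k t" by simp
    hence "\<exists>F. finite F \<and> F \<subseteq> C \<and> (\<forall>k\<in>C. \<exists>t\<in>F. R k t)" using that by (intro exI[of _ F]) simp
    thus False using neg by (rule notE[rotated])
  qed
  define nxt where "nxt F = (SOME k. k \<in> C \<and> (\<forall>t\<in>F. \<not> R k t))" for F
  define X where "X n = ((\<lambda>F. insert (nxt F) F) ^^ n) {}" for n
  have XS: "X (Suc n) = insert (nxt (X n)) (X n)" for n unfolding X_def by simp
  have P: "finite (X n) \<and> X n \<subseteq> C \<and> card (X n) = n \<and>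
      (\<forall>x\<in>X n. \<forall>y\<in>X n. x \<noteq> y \<longrightarrow> \<not> R x y \<or> \<not> R y x)" for n
  proof (induction n)
    case 0 thus ?case by (simp add: X_def)
  next
    case (Suc n)
    have f: "finite (X n)" and sub: "X n \<subseteq> C" and cd: "card (X n) = n"
      and sp: "\<forall>x\<in>X n. \<forall>y\<in>X n. x \<noteq> y \<longrightarrow> \<not> R x y \<or> \<not> R y x" using Suc.IH by simp_all
    have "\<exists>k\<in>C. \<forall>t\<in>X n. \<not> R k t" using Hy[OF f sub] .
    hence ex: "\<exists>k. k \<in> C \<and> (\<forall>t\<in>X n. \<not> R k t)" by (simp only: Bex_def)
    have k: "nxt (X n) \<in> C" "\<forall>t\<in>X n. \<not> R (nxt (X n)) t"
      using someI_ex[OF ex] unfolding nxt_def by simp_all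
    have kn: "nxt (X n) \<notin> X n"
    proof
      assume "nxt (X n) \<in> X n"
      hence "\<not> R (nxt (X n)) (nxt (X n))" using k(2) by simp
      thus False using refl[OF k(1)] by simp
    qed
    have sp2: "\<forall>x\<in>insert (nxt (X n)) (X n). \<forall>y\<in>insert (nxt (X n)) (X n). x \<noteq> y \<longrightarrow> \<not> R x y \<or> \<not> R y x"
    proof (intro ballI impI)
      fix x y assume x: "x \<in> insert (nxt (X n)) (X n)" and y: "y \<in> insert (nxt (X n)) (X n)" and xy: "x \<noteq> y"
      show "\<not> R x y \<or> \<not> R y x"
      proof (cases "x = nxt (X n)")
        case True
        hence "y \<in> X n" using y xy by simp
        thus ?thesis using k(2) True by simp
      next
        case False
        hence x': "x \<in> X n" using x by simp
        show ?thesis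
        proof (cases "y = nxt (X n)")
          case True thus ?thesis using k(2) x' by simp
        next
          case False
          hence "y \<in> X n" using y by simp
          thus ?thesis using sp x' xy by simp
        qed
      qed
    qed
    have cd2: "card (insert (nxt (X n)) (X n)) = Suc n" using f kn cd by simp
    have sub2: "insert (nxt (X n)) (X n) \<subseteq> C" using sub k(1) by simp
    have f2: "finite (insert (nxt (X n)) (X n))" using f by simp
    show ?case unfolding XS using f2 sub2 cd2 sp2 by (intro conjI)
  qed
  have mono: "X a \<subseteq> X b" if "a \<le> b" for a b
  proof (rule lift_Suc_mono_le[of X, OF _ that])
    show "X n \<subseteq> X (Suc n)" for n unfolding XS by (rule subset_insertI)
  qed
  define T where "T = (\<Union>n. X n)"
  have TC: "T \<subseteq> C" unfolding T_def
  proof (rule UN_least)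
    show "X n \<subseteq> C" for n using P[of n] by blast
  qed
  have cT: "countable T" unfolding T_def
    by (rule countable_UN) (simp_all add: countable_finite P)
  have iT: "infinite T"
  proof
    assume "finite T"
    moreover have "X (Suc (card T)) \<subseteq> T" unfolding T_def by blast
    ultimately have "card (X (Suc (card T))) \<le> card T" by (rule card_mono)
    thus False using P by simp
  qed
  have sep: "\<not> R x y \<or> \<not> R y x" if xT: "x \<in> T" and yT: "y \<in> T" and xy: "x \<noteq> y" for x y
  proof -
    obtain a where a: "x \<in> X a" using xT unfolding T_def by blast
    obtain b where b: "y \<in> X b" using yT unfolding T_def by blast
    have "x \<in> X (max a b)" using mono[of a "max a b"] a by auto
    moreover have "y \<in> X (max a b)" using mono[of b "max a b"] b by auto
    ultimately show ?thesis using P[of "max a b"] xy by blast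
  qed
  obtain p where p: "p \<in> C" "\<And>U. p \<in> U \<Longrightarrow> open U \<Longrightarrow> infinite (U \<inter> T)"
    by (rule acc_in_closed[OF cc C TC cT iT]) blast
  obtain W where W: "open W" "p \<in> W" "\<forall>x\<in>W \<inter> C. \<forall>y\<in>W \<inter> C. R x y" using loc[OF p(1)] by blast
  obtain a b where ab: "a \<in> W \<inter> T" "b \<in> W \<inter> T" "a \<noteq> b"
    by (rule two_in_infinite[OF p(2)[OF W(2,1)]])
  have "a \<in> W \<inter> C" "b \<in> W \<inter> C" using ab TC by blast+
  hence "R a b" "R b a" using W(3) by blast+
  moreover have "a \<in> T" "b \<in> T" using ab by blast+
  ultimately show False using sep[of a b] ab(3) by blast
qed

lemma sep_finite:
  fixes D :: "'a::t2_space set"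
  assumes "finite D" "z \<notin> D"
  shows "\<exists>A B. open A \<and> open B \<and> D \<subseteq> A \<and> z \<in> B \<and> A \<inter> B = {}"
  using assms
proof (induction D rule: finite_induct)
  case empty show ?case by (intro exI[of _ "{}"] exI[of _ UNIV]) auto
next
  case (insert x F)
  then obtain A B where AB: "open A" "open B" "F \<subseteq> A" "z \<in> B" "A \<inter> B = {}" by auto
  obtain U V where UV: "open U" "open V" "x \<in> U" "z \<in> V" "U \<inter> V = {}"
    using separation_t2[of x z] insert by auto
  show ?case
    by (rule exI[of _ "A \<union> U"], rule exI[of _ "B \<inter> V"]) (use AB UV in auto)
qed



context pisg begin

lemma transport:
  assumes "r y = r a" "d y = d a"
  shows "m (i a) y \<in> H (d a)" and "i y = m (i (m (i a) y)) (i a)"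
proof -
  have "r (m (i a) y) = m (i a) (m (m y (i y)) a)" unfolding r_def by (simp add: inv_prod)
  also have "\<dots> = m (i a) (m (r a) a)" using assms(1) unfolding r_def by simp
  also have "\<dots> = d a" unfolding d_def by (simp only: r_left)
  finally have 1: "r (m (i a) y) = d a" .
  have "d (m (i a) y) = m (i y) (m (m a (i a)) y)" unfolding d_def by (simp add: inv_prod)
  also have "\<dots> = m (i y) (m (r y) y)" using assms(1) unfolding r_def by simp
  also have "\<dots> = d y" unfolding d_def by (simp only: r_left)
  finally have 2: "d (m (i a) y) = d a" using assms(2) by simp
  show "m (i a) y \<in> H (d a)" using 1 2 unfolding H_def by simp
  have "m (i (m (i a) y)) (i a) = m (i y) (m a (i a))" by (simp add: inv_prod)
  also have "\<dots> = m (i y) (m y (i y))" using assms(1) unfolding r_def by simp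
  also have "\<dots> = i y" by simp
  finally show "i y = m (i (m (i a) y)) (i a)" by simp
qed

end

locale tpisg = pisg m z for m :: "'a::t2_space \<Rightarrow> 'a \<Rightarrow> 'a" and z +
  assumes ts: "topological_semigroup m"
begin

lemma mcont: "continuous_on UNIV (\<lambda>p. m (fst p) (snd p))"
  using ts unfolding topological_semigroup_def by blast

lemma cont_m:
  assumes "continuous_on S f" "continuous_on S g"
  shows "continuous_on S (\<lambda>x. m (f x) (g x))"
proof -
  have "continuous_on S (\<lambda>x. (f x, g x))" using assms by (rule continuous_on_Pair)
  from continuous_on_compose2[OF mcont this] show ?thesis by simp
qed

lemma open_pre: "open B \<Longrightarrow> continuous_on UNIV h \<Longrightarrow> open (h -` B)"
  using continuous_on_open_vimage[OF open_UNIV, of h] by simp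

lemma prod_nbhd:
  assumes "open A" "m u v \<in> A"
  shows "\<exists>A1 A2. open A1 \<and> open A2 \<and> u \<in> A1 \<and> v \<in> A2 \<and> (\<forall>x\<in>A1. \<forall>y\<in>A2. m x y \<in> A)"
proof -
  have "open ((\<lambda>p. m (fst p) (snd p)) -` A)" by (rule open_pre[OF assms(1) mcont])
  moreover have "(u, v) \<in> (\<lambda>p. m (fst p) (snd p)) -` A" using assms(2) by simp
  ultimately obtain A1 A2 where "open A1" "open A2" "(u, v) \<in> A1 \<times> A2"
    "A1 \<times> A2 \<subseteq> (\<lambda>p. m (fst p) (snd p)) -` A" by (rule open_prod_elim)
  thus ?thesis by (intro exI[of _ A1] exI[of _ A2]) auto
qed

lemma lmul_cont: "continuous_on S (\<lambda>y. m c y)"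
  by (rule cont_m) (simp_all add: continuous_on_const continuous_on_id)
lemma rmul_cont: "continuous_on S (\<lambda>y. m y c)"
  by (rule cont_m) (simp_all add: continuous_on_const continuous_on_id)

definition Ob where "Ob a = {y. m (r a) y \<noteq> z \<and> m y (d a) \<noteq> z}"

lemma O_open: "open (Ob a)"
proof -
  have "Ob a = (\<lambda>y. m (r a) y) -` (- {z}) \<inter> (\<lambda>y. m y (d a)) -` (- {z})" unfolding Ob_def by auto
  moreover have oz: "open (- {z})" by (simp add: open_Compl)
  ultimately show ?thesis by (simp only:) (intro open_Int open_pre[OF oz lmul_cont] open_pre[OF oz rmul_cont])
qed

lemma O_mem: "a \<noteq> z \<Longrightarrow> a \<in> Ob a"
  unfolding Ob_def by simp

lemma O_rd: "y \<in> Ob a \<Longrightarrow> r y = r a \<and> d y = d a"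
  unfolding Ob_def using key_r key_d by blast

end


locale tpisg2 = tpisg m z for m :: "'a::t2_space \<Rightarrow> 'a \<Rightarrow> 'a" and z +
  assumes hyp: "\<forall>G. maximal_subgroup m G \<longrightarrow> topological_subgroup m G"
    and cc: "countably_compact (UNIV :: 'a set)"
begin

lemma cont_H:
  assumes e: "m e e = e" shows "continuous_on (H e) i"
proof -
  have "topological_subgroup m (H e)" using hyp H_max[OF e] by blast
  then obtain e' where S: "subgroup_at m (H e) e'"
    and c: "continuous_on (H e) (\<lambda>x. THE y. y \<in> H e \<and> m x y = e' \<and> m y x = e')"
    unfolding topological_subgroup_def by blast
  have "continuous_on (H e) (\<lambda>x. THE y. y \<in> H e \<and> m x y = e' \<and> m y x = e') = continuous_on (H e) i"
    by (rule continuous_on_cong) (simp_all add: group_inv[OF S])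
  thus ?thesis using c by simp
qed

lemma cont_Ob:
  assumes az: "a \<noteq> z" shows "continuous_on (Ob a) i"
proof -
  have g: "continuous_on (Ob a) (\<lambda>y. m (i a) y)" by (rule lmul_cont)
  have img: "(\<lambda>y. m (i a) y) ` Ob a \<subseteq> H (d a)" using transport(1) O_rd by blast
  have "continuous_on (Ob a) (\<lambda>y. i (m (i a) y))" by (rule continuous_on_compose2[OF cont_H[OF d_idem] g img])
  hence c: "continuous_on (Ob a) (\<lambda>y. m (i (m (i a) y)) (i a))" by (rule cont_m) (rule continuous_on_const)
  have "continuous_on (Ob a) (\<lambda>y. m (i (m (i a) y)) (i a)) = continuous_on (Ob a) i"
  proof (rule continuous_on_cong)
    fix x assume "x \<in> Ob a"
    hence rd: "r x = r a" "d x = d a" using O_rd by blast+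
    show "m (i (m (i a) x)) (i a) = i x" by (rule sym, rule transport(2)[OF rd])
  qed simp
  thus ?thesis using c by simp
qed

lemma cont_nz: "continuous_on (- {z}) i"
proof -
  have oz: "open (- {z})" by (simp add: open_Compl)
  show ?thesis
  proof (subst continuous_on_eq_continuous_at[OF oz], intro ballI)
    fix x assume "x \<in> - {z}"
    hence xz: "x \<noteq> z" by simp
    have "\<forall>y\<in>Ob x. isCont i y" using continuous_on_eq_continuous_at[OF O_open] cont_Ob[OF xz] by blast
    thus "isCont i x" using O_mem[OF xz] by blast
  qed
qed

lemma cont_z: "isCont i z"
  unfolding continuous_at_open
proof (intro allI impI)
  fix V assume V: "open V \<and> i z \<in> V"
  define C where "C = - V"
  have Cc: "closed C" unfolding C_def using V by (simp add: closed_Compl)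
  have zC: "x \<noteq> z" if "x \<in> C" for x using that V unfolding C_def by auto
  have oz: "open (- {z})" by (simp add: open_Compl)
  have dc: "continuous_on (- {z}) d"
  proof -
    have "continuous_on (- {z}) (\<lambda>x. m (i x) x)" by (rule cont_m[OF cont_nz continuous_on_id])
    moreover have "(\<lambda>x. m (i x) x) = d" unfolding d_def by (rule ext) simp
    ultimately show ?thesis by metis
  qed
  have fin: "finite (d ` C)"
  proof (rule finite_image_cc[OF cc Cc])
    fix p assume pC: "p \<in> C"
    define W where "W = d -` Ob (d p) \<inter> - {z}"
    have "open W" unfolding W_def by (rule continuous_on_open_vimage[OF oz, THEN iffD1, OF dc, rule_format, OF O_open])
    moreover have "p \<in> W" unfolding W_def using O_mem[OF d_nz[OF zC[OF pC]]] zC[OF pC] by simp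
    moreover have "\<forall>x\<in>W \<inter> C. d x = d p"
    proof
      fix x assume "x \<in> W \<inter> C"
      hence "d x \<in> Ob (d p)" unfolding W_def by simp
      hence "r (d x) = r (d p)" using O_rd by blast
      thus "d x = d p" using idem_r[OF d_idem] by simp
    qed
    ultimately show "\<exists>W. open W \<and> p \<in> W \<and> (\<forall>x\<in>W \<inter> C. d x = d p)" by (intro exI[of _ W] conjI)
  qed
  have zn: "z \<notin> d ` C" using zC d_nz by blast
  obtain A B where AB: "open A" "open B" "d ` C \<subseteq> A" "z \<in> B" "A \<inter> B = {}"
    using sep_finite[OF fin zn] by blast
  have "\<exists>F. finite F \<and> F \<subseteq> C \<and> (\<forall>k\<in>C. \<exists>t\<in>F. m (i k) t \<in> A)"
  proof (rule cover_lemma[OF cc Cc])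
    fix k assume "k \<in> C"
    hence "d k \<in> A" using AB(3) by blast
    thus "m (i k) k \<in> A" unfolding d_def .
  next
    fix p assume pC: "p \<in> C"
    have "m (i p) p \<in> A" using AB(3) pC unfolding d_def by blast
    then obtain A1 A2 where A12: "open A1" "open A2" "i p \<in> A1" "p \<in> A2" "\<forall>x\<in>A1. \<forall>y\<in>A2. m x y \<in> A"
      using prod_nbhd[OF AB(1) \<open>m (i p) p \<in> A\<close>] by blast
    define W where "W = A2 \<inter> (i -` A1 \<inter> - {z})"
    have "open W" unfolding W_def
      by (rule open_Int[OF A12(2) continuous_on_open_vimage[OF oz, THEN iffD1, OF cont_nz, rule_format, OF A12(1)]])
    moreover have "p \<in> W" unfolding W_def using A12 zC[OF pC] by simp
    moreover have "\<forall>x\<in>W \<inter> C. \<forall>y\<in>W \<inter> C. m (i x) y \<in> A" unfolding W_def using A12(5) by blast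
    ultimately show "\<exists>W. open W \<and> p \<in> W \<and> (\<forall>x\<in>W \<inter> C. \<forall>y\<in>W \<inter> C. m (i x) y \<in> A)" by (intro exI[of _ W] conjI)
  qed
  then obtain F where F: "finite F" "F \<subseteq> C" "\<forall>k\<in>C. \<exists>t\<in>F. m (i k) t \<in> A" by blast
  define N where "N = B \<inter> (\<Inter>t\<in>F. (\<lambda>y. m y t) -` B)"
  have "open N" unfolding N_def
    by (intro open_Int AB(2) open_INT F(1) ballI open_pre[OF AB(2) rmul_cont])
  moreover have "z \<in> N" unfolding N_def using AB(4) by simp
  moreover have "\<forall>y\<in>N. i y \<in> V"
  proof
    fix y assume yN: "y \<in> N"
    show "i y \<in> V"
    proof (rule ccontr)
      assume "i y \<notin> V"
      hence "i y \<in> C" unfolding C_def by simp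
      then obtain t where t: "t \<in> F" "m (i (i y)) t \<in> A" using F(3) by blast
      hence "m y t \<in> A" by simp
      moreover have "m y t \<in> B" using yN t(1) unfolding N_def by blast
      ultimately show False using AB(5) by blast
    qed
  qed
  ultimately show "\<exists>S. open S \<and> z \<in> S \<and> (\<forall>x'\<in>S. i x' \<in> V)" by (intro exI[of _ N] conjI)
qed

lemma inv_cont: "continuous_on UNIV i"
proof (subst continuous_on_eq_continuous_at[OF open_UNIV], intro ballI)
  fix x :: 'a
  show "isCont i x"
  proof (cases "x = z")
    case True thus ?thesis using cont_z by simp
  next
    case False
    have oz: "open (- {z})" by (simp add: open_Compl)
    thus ?thesis using continuous_on_eq_continuous_at[OF oz] cont_nz False by blast
  qed
qed

end



theorem corollary3p11:
  fixes m :: "'a::t2_space \<Rightarrow> 'a \<Rightarrow> 'a"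
  assumes "topological_semigroup m"
    and "countably_compact (UNIV :: 'a set)"
    and "primitive_inverse_semigroup m"
  shows "continuous_on UNIV (sg_inv m) \<longleftrightarrow>
         (\<forall>G. maximal_subgroup m G \<longrightarrow> topological_subgroup m G)"
proof -
  have isg: "inverse_semigroup m" using assms(3) unfolding primitive_inverse_semigroup_def by blast
  obtain z where z: "is_zero m z"
    and pr: "\<forall>e f. idempotent m e \<and> idempotent m f \<and> e \<noteq> z \<and> f \<noteq> z \<and> idem_le m e f \<longrightarrow> e = f"
    using assms(3) unfolding primitive_inverse_semigroup_def by blast
  interpret tpisg m z
  proof
    show "inverse_semigroup m" by (rule isg)
    show "is_zero m z" by (rule z)
    show "\<And>e f. idempotent m e \<Longrightarrow> idempotent m f \<Longrightarrow> e \<noteq> z \<Longrightarrow> f \<noteq> z \<Longrightarrow> idem_le m e f \<Longrightarrow> e = f"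
      using pr by blast
    show "topological_semigroup m" by (rule assms(1))
  qed
  show ?thesis
  proof
    assume ci: "continuous_on UNIV (sg_inv m)"
    show "\<forall>G. maximal_subgroup m G \<longrightarrow> topological_subgroup m G"
    proof (intro allI impI)
      fix G assume "maximal_subgroup m G"
      then obtain e where S: "subgroup_at m G e" unfolding maximal_subgroup_def is_subgroup_def by blast
      have c1: "continuous_on (G \<times> G) (\<lambda>p. m (fst p) (snd p))"
        by (rule continuous_on_subset[OF mcont subset_UNIV])
      have "continuous_on G (sg_inv m)" by (rule continuous_on_subset[OF ci subset_UNIV])
      moreover have "continuous_on G (\<lambda>x. THE y. y \<in> G \<and> m x y = e \<and> m y x = e) = continuous_on G (sg_inv m)"
        by (rule continuous_on_cong) (simp_all add: group_inv[OF S])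
      ultimately have c2: "continuous_on G (\<lambda>x. THE y. y \<in> G \<and> m x y = e \<and> m y x = e)" by simp
      show "topological_subgroup m G" unfolding topological_subgroup_def
        using S c1 c2 by blast
    qed
  next
    assume hyp: "\<forall>G. maximal_subgroup m G \<longrightarrow> topological_subgroup m G"
    interpret tpisg2 m z
    proof
      show "\<forall>G. maximal_subgroup m G \<longrightarrow> topological_subgroup m G" by (rule hyp)
      show "countably_compact (UNIV :: 'a set)" by (rule assms(2))
    qed
    show "continuous_on UNIV (sg_inv m)" by (rule inv_cont)
  qed
qed


end
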